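(* If $f\in H^2(\mu)$ and $m\in\{0,1,2,\dots\}$, then $$\|f\|_{H^2(\mu)}^2\le (m+3)\sum_{\substack{n=-1\\ n\ne m}}^\infty\int_{-\infty}^\infty \left|f\!\left(\tfrac n2+iy\right)\right|^2\frac{|\Gamma(\frac n2+1+iy)|^2}{2\pi(n+1)!}\,dy.$$
   Context: $\Omega=\{z:\mathrm{Re}\,z\ge-\tfrac12\}$ and $\mu$ is the measure on $\Omega$ given by $d\mu=\sum_{n=-1}^\infty \frac{|\Gamma(\frac n2+iy+1)|^2}{2\pi(n+1)!}\,dy\,d\delta_{n/2}(x)$, supported on the lines $\mathrm{Re}\,z=n/2$; so $\|f\|^2_{L^2(\mu)}=\sum_{n=-1}^\infty\int|f(\frac n2+iy)|^2\frac{|\Gamma(\frac n2+1+iy)|^2}{2\pi(n+1)!}dy$. $H^2(\mu)$ is the closed linear span of $\{a^z=e^{z\ln a}:0<a\le1\}$ in $L^2(\mu)$. *)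

theory Defs
  imports "HOL-Analysis.Analysis"
begin

definition mu_weight :: "int \<Rightarrow> real \<Rightarrow> real" where
  "mu_weight n y = (cmod (Gamma (Complex (real_of_int n / 2 + 1) y)))^2
                   / (2 * pi * fact (nat (n + 1)))"

definition line_int :: "(complex \<Rightarrow> complex) \<Rightarrow> int \<Rightarrow> ennreal" where
  "line_int f n = (\<integral>\<^sup>+ y. ennreal ((cmod (f (Complex (real_of_int n / 2) y)))^2 * mu_weight n y) \<partial>lborel)"

text \<open>Squared L2(mu) norm: sum over n = -1, 0, 1, ... (index k = n + 1).\<close>
definition L2mu_normsq :: "(complex \<Rightarrow> complex) \<Rightarrow> ennreal" where
  "L2mu_normsq f = (\<Sum>k. line_int f (int k - 1))"

definition in_L2mu :: "(complex \<Rightarrow> complex) \<Rightarrow> bool" where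
  "in_L2mu f \<longleftrightarrow> (\<forall>n::int. n \<ge> -1 \<longrightarrow>
       (\<lambda>y. f (Complex (real_of_int n / 2) y)) \<in> borel_measurable lborel)
     \<and> L2mu_normsq f < \<infinity>"

definition expfun :: "real \<Rightarrow> complex \<Rightarrow> complex" where
  "expfun a z = exp (z * complex_of_real (ln a))"

definition span_exp :: "(complex \<Rightarrow> complex) set" where
  "span_exp = {g. \<exists>A c. finite A \<and> A \<subseteq> {0<..1} \<and> g = (\<lambda>z. \<Sum>a\<in>A. c a * expfun a z)}"

text \<open>H^2(mu): closure of span_exp in L2(mu).\<close>
definition H2mu :: "(complex \<Rightarrow> complex) \<Rightarrow> bool" where
  "H2mu f \<longleftrightarrow> in_L2mu f \<and>
     (\<forall>e>0. \<exists>g\<in>span_exp. L2mu_normsq (\<lambda>z. f z - g z) < ennreal e)"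

end

theory Submission
  imports Defs "HOL-Probability.Probability"
begin


lemma gauss_basic:
  "(\<integral>x. exp (\<i> * complex_of_real (t * x)) * complex_of_real (exp (- x\<^sup>2 / 2)) \<partial>lborel)
     = complex_of_real (sqrt (2*pi) * exp (- t\<^sup>2 / 2))"
proof -
  have "char std_normal_distribution t = complex_of_real (exp (- t\<^sup>2 / 2))"
    by (simp add: char_std_normal_distribution)
  moreover have "char std_normal_distribution t =
      (\<integral>x. complex_of_real (std_normal_density x) * exp (\<i> * complex_of_real (t * x)) \<partial>lborel)"
    unfolding char_def
    by (subst integral_density) (auto simp: normal_density_nonneg scaleR_conv_of_real)
  moreover have "(\<integral>x. complex_of_real (std_normal_density x) * exp (\<i> * complex_of_real (t * x)) \<partial>lborel)
     = complex_of_real (1 / sqrt (2*pi)) * (\<integral>x. exp (\<i> * complex_of_real (t * x)) * complex_of_real (exp (- x\<^sup>2 / 2)) \<partial>lborel)"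
    by (simp add: std_normal_density_def mult_ac flip: integral_mult_right_zero)
  ultimately show ?thesis
    by (auto simp: field_simps of_real_mult)
qed



lemma gauss_scaled:
  fixes \<delta> :: real
  assumes d: "\<delta> > 0"
  shows "(\<integral>y. complex_of_real (exp (- (\<delta>*y)\<^sup>2 / 2)) * exp (\<i> * complex_of_real (y * v)) \<partial>lborel)
     = complex_of_real (sqrt (2*pi) / \<delta> * exp (- (v/\<delta>)\<^sup>2 / 2))"
proof -
  have "(\<integral>x. exp (\<i> * complex_of_real ((v/\<delta>) * x)) * complex_of_real (exp (- x\<^sup>2 / 2)) \<partial>lborel)
      = \<bar>\<delta>\<bar> *\<^sub>R (\<integral>y. exp (\<i> * complex_of_real ((v/\<delta>) * (0 + \<delta>*y))) * complex_of_real (exp (- (0 + \<delta>*y)\<^sup>2 / 2)) \<partial>lborel)"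
    by (rule lborel_integral_real_affine) (use d in auto)
  also have "(\<lambda>y. exp (\<i> * complex_of_real ((v/\<delta>) * (0 + \<delta>*y))) * complex_of_real (exp (- (0 + \<delta>*y)\<^sup>2 / 2)))
      = (\<lambda>y. complex_of_real (exp (- (\<delta>*y)\<^sup>2 / 2)) * exp (\<i> * complex_of_real (y * v)))"
    using d by (auto simp: field_simps)
  finally have "(\<integral>x. exp (\<i> * complex_of_real ((v/\<delta>) * x)) * complex_of_real (exp (- x\<^sup>2 / 2)) \<partial>lborel) = \<delta> *\<^sub>R
     (\<integral>y. complex_of_real (exp (- (\<delta>*y)\<^sup>2 / 2)) * exp (\<i> * complex_of_real (y * v)) \<partial>lborel)"
    using d by simp
  then have "complex_of_real (sqrt (2*pi) * exp (- (v/\<delta>)\<^sup>2 / 2)) = \<delta> *\<^sub>R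
     (\<integral>y. complex_of_real (exp (- (\<delta>*y)\<^sup>2 / 2)) * exp (\<i> * complex_of_real (y * v)) \<partial>lborel)"
    by (simp only: gauss_basic)
  then show ?thesis using d
    by (simp add: scaleR_conv_of_real field_simps of_real_mult)
qed

lemma nd_eq:
  fixes \<delta> :: real assumes d: "\<delta> > 0"
  shows "(\<lambda>y. (sqrt (2*pi) / \<delta>) * normal_density 0 (1/\<delta>) y) = (\<lambda>y. exp (- (\<delta>*y)\<^sup>2 / 2))"
proof
  fix y
  have s: "sqrt (2 * pi * (1/\<delta>)\<^sup>2) = sqrt (2*pi) / \<delta>"
    using d by (simp add: real_sqrt_mult real_sqrt_divide)
  show "(sqrt (2*pi) / \<delta>) * normal_density 0 (1/\<delta>) y = exp (- (\<delta>*y)\<^sup>2 / 2)"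
    unfolding normal_density_def s using d by (simp add: field_simps power2_eq_square)
qed

lemma integrable_gauss:
  fixes \<delta> :: real
  assumes d: "\<delta> > 0"
  shows "integrable lborel (\<lambda>y. exp (- (\<delta>*y)\<^sup>2 / 2))"
proof -
  have "integrable lborel (\<lambda>y. (sqrt (2*pi) / \<delta>) * normal_density 0 (1/\<delta>) y)"
    using d by (intro integrable_mult_right integrable_normal_density) auto
  moreover have "(\<lambda>y. (sqrt (2*pi) / \<delta>) * normal_density 0 (1/\<delta>) y) = (\<lambda>y. exp (- (\<delta>*y)\<^sup>2 / 2))"
    using d by (rule nd_eq)
  ultimately show ?thesis by simp
qed

lemma integral_gauss:
  fixes \<delta> :: real
  assumes d: "\<delta> > 0"
  shows "(\<integral>y. exp (- (\<delta>*y)\<^sup>2 / 2) \<partial>lborel) = sqrt (2*pi) / \<delta>"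
proof -
  have "(\<integral>y. exp (- (\<delta>*y)\<^sup>2 / 2) \<partial>lborel) = (\<integral>y. (sqrt (2*pi) / \<delta>) * normal_density 0 (1/\<delta>) y \<partial>lborel)"
    by (simp only: nd_eq[OF d])
  also have "\<dots> = (sqrt (2*pi) / \<delta>) * (\<integral>y. normal_density 0 (1/\<delta>) y \<partial>lborel)"
    by (rule integral_mult_right_zero)
  also have "(\<integral>y. normal_density 0 (1/\<delta>) y \<partial>lborel) = 1"
    using integral_normal_density[where \<sigma>="1/\<delta>" and \<mu>=0] d by simp
  finally show ?thesis by simp
qed



lemma integrable_pair_bound:
  fixes \<Phi> :: "'a \<times> 'b \<Rightarrow> 'c::{banach, second_countable_topology}"
  assumes M: "sigma_finite_measure M" and N: "sigma_finite_measure N"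
    and Phi[measurable]: "\<Phi> \<in> borel_measurable (M \<Otimes>\<^sub>M N)"
    and a: "integrable M a" and b: "integrable N b"
    and a0: "\<And>x. a x \<ge> 0" and b0: "\<And>y. b y \<ge> 0"
    and bd: "\<And>x y. x \<in> space M \<Longrightarrow> y \<in> space N \<Longrightarrow> norm (\<Phi> (x,y)) \<le> a x * b y"
  shows "integrable (M \<Otimes>\<^sub>M N) \<Phi>"
proof -
  interpret pair_sigma_finite M N using M N by (simp add: pair_sigma_finite_def)
  have am[measurable]: "a \<in> borel_measurable M" using a by auto
  have bm[measurable]: "b \<in> borel_measurable N" using b by auto
  have "integrable (M \<Otimes>\<^sub>M N) (\<lambda>p. a (fst p) * b (snd p))"
  proof (rule Fubini_integrable)
    show "(\<lambda>p. a (fst p) * b (snd p)) \<in> borel_measurable (M \<Otimes>\<^sub>M N)" by measurable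
    have "(\<lambda>x. \<integral>y. norm (a (fst (x, y)) * b (snd (x, y))) \<partial>N) = (\<lambda>x. a x * integral\<^sup>L N b)"
      using a0 b0 by (simp add: abs_mult)
    then show "integrable M (\<lambda>x. \<integral>y. norm (a (fst (x, y)) * b (snd (x, y))) \<partial>N)"
      using a by simp
    show "AE x in M. integrable N (\<lambda>y. a (fst (x, y)) * b (snd (x, y)))"
      using b by simp
  qed
  then show ?thesis
  proof (rule Bochner_Integration.integrable_bound)
    show "\<Phi> \<in> borel_measurable (M \<Otimes>\<^sub>M N)" by measurable
    show "AE x in M \<Otimes>\<^sub>M N. norm (\<Phi> x) \<le> norm (a (fst x) * b (snd x))"
      using bd a0 b0 by (intro AE_I2) (auto simp: space_pair_measure abs_mult)
  qed
qed



definition FT :: "(real \<Rightarrow> complex) \<Rightarrow> real \<Rightarrow> complex" where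
  "FT h y = (\<integral>t. exp (\<i> * complex_of_real (y * t)) * h t \<partial>lborel)"

definition gs :: "real \<Rightarrow> real \<Rightarrow> real" where
  "gs \<delta> y = exp (- (\<delta>*y)\<^sup>2 / 2)"

definition KK :: "real \<Rightarrow> real \<Rightarrow> real" where
  "KK \<delta> v = sqrt (2*pi) / \<delta> * exp (- (v/\<delta>)\<^sup>2 / 2)"

lemma iexp_norm[simp]: "norm (exp (\<i> * complex_of_real x)) = 1"
  by simp

lemma sfm_lborel: "sigma_finite_measure (lborel :: real measure)"
  by (rule lborel.sigma_finite_measure_axioms)

lemma sfm_lborel2: "sigma_finite_measure (lborel \<Otimes>\<^sub>M lborel :: (real \<times> real) measure)"
  by (intro sigma_finite_pair_measure sfm_lborel)

context
  fixes h :: "real \<Rightarrow> complex" and B :: real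
  assumes cont: "continuous_on UNIV h" and int: "integrable lborel h"
    and bnd: "\<And>t. norm (h t) \<le> B"
begin

lemma hm[measurable]: "h \<in> borel_measurable borel"
  using cont by (rule borel_measurable_continuous_onI)

lemma hcm[measurable]: "(\<lambda>x. cnj (h x)) \<in> borel_measurable borel"
  by (rule borel_measurable_continuous_onI) (intro continuous_intros cont)

lemma int_norm_h: "integrable lborel (\<lambda>t. norm (h t))"
  using int by auto

lemma FT_bound: "norm (FT h y) \<le> (\<integral>t. norm (h t) \<partial>lborel)"
proof -
  have "norm (FT h y) \<le> (\<integral>t. norm (exp (\<i> * complex_of_real (y * t)) * h t) \<partial>lborel)"
    unfolding FT_def by (rule integral_norm_bound)
  also have "\<dots> = (\<integral>t. norm (h t) \<partial>lborel)"
    by (simp add: norm_mult)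
  finally show ?thesis .
qed

lemma FT_meas[measurable]: "FT h \<in> borel_measurable borel"
  unfolding FT_def[abs_def] by measurable


lemma pair_int1: "integrable (lborel \<Otimes>\<^sub>M lborel)
   (\<lambda>p. h (snd p) * cnj (h (fst p)) * exp (\<i> * complex_of_real (y * (snd p - fst p))))"
  apply (rule integrable_pair_bound[OF sfm_lborel sfm_lborel _ int_norm_h int_norm_h])
  apply measurable
  apply (auto simp: norm_mult)
  done

lemma FT_sq: "FT h y * cnj (FT h y) = (\<integral>p. h (snd p) * cnj (h (fst p)) * exp (\<i> * complex_of_real (y * (snd p - fst p))) \<partial>(lborel \<Otimes>\<^sub>M lborel))"
proof -
  have "(\<integral>p. h (snd p) * cnj (h (fst p)) * exp (\<i> * complex_of_real (y * (snd p - fst p))) \<partial>(lborel \<Otimes>\<^sub>M lborel))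
     = (\<integral>u. \<integral>t. h (snd (u,t)) * cnj (h (fst (u,t))) * exp (\<i> * complex_of_real (y * (snd (u,t) - fst (u,t)))) \<partial>lborel \<partial>lborel)"
    using lborel_pair.integral_fst'[OF pair_int1] by simp
  also have "\<dots> = (\<integral>u. (cnj (h u) * exp (- (\<i> * complex_of_real (y * u)))) * FT h y \<partial>lborel)"
  proof (rule Bochner_Integration.integral_cong[OF refl])
    fix u
    have "(\<lambda>t. h (snd (u,t)) * cnj (h (fst (u,t))) * exp (\<i> * complex_of_real (y * (snd (u,t) - fst (u,t)))))
        = (\<lambda>t. (cnj (h u) * exp (- (\<i> * complex_of_real (y * u)))) * (exp (\<i> * complex_of_real (y * t)) * h t))"
      by (auto simp: algebra_simps exp_diff exp_minus field_simps simp flip: exp_add)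
    then show "(\<integral>t. h (snd (u,t)) * cnj (h (fst (u,t))) * exp (\<i> * complex_of_real (y * (snd (u,t) - fst (u,t)))) \<partial>lborel)
       = (cnj (h u) * exp (- (\<i> * complex_of_real (y * u)))) * FT h y"
      unfolding FT_def by simp
  qed
  also have "\<dots> = cnj (\<integral>u. exp (\<i> * complex_of_real (y * u)) * h u \<partial>lborel) * FT h y"
  proof -
    have "(\<lambda>u. cnj (h u) * exp (- (\<i> * complex_of_real (y * u)))) = (\<lambda>u. cnj (exp (\<i> * complex_of_real (y * u)) * h u))"
      by (auto simp: exp_cnj mult.commute)
    then have "(\<integral>u. cnj (h u) * exp (- (\<i> * complex_of_real (y * u))) \<partial>lborel) = cnj (\<integral>u. exp (\<i> * complex_of_real (y * u)) * h u \<partial>lborel)"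
      by (simp only: Bochner_Integration.integral_cnj)
    then show ?thesis by (simp only: integral_mult_left_zero)
  qed
  finally show ?thesis by (simp add: FT_def mult.commute)
qed


lemma int_hh: "integrable (lborel \<Otimes>\<^sub>M lborel) (\<lambda>p. norm (h (fst p)) * norm (h (snd p)))"
  apply (rule integrable_pair_bound[OF sfm_lborel sfm_lborel _ int_norm_h int_norm_h])
  apply measurable
  done

lemma step3:
  assumes d: "\<delta> > 0"
  shows "(\<integral>y. complex_of_real (gs \<delta> y) * (FT h y * cnj (FT h y)) \<partial>lborel)
     = (\<integral>p. h (snd p) * cnj (h (fst p)) * complex_of_real (KK \<delta> (snd p - fst p)) \<partial>(lborel \<Otimes>\<^sub>M lborel))"
proof -
  interpret P3: pair_sigma_finite "lborel :: real measure" "lborel \<Otimes>\<^sub>M lborel :: (real \<times> real) measure"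
    by (simp add: pair_sigma_finite_def sfm_lborel sfm_lborel2)
  define f where "f = (\<lambda>y (p::real\<times>real). complex_of_real (gs \<delta> y) *
      (h (snd p) * cnj (h (fst p)) * exp (\<i> * complex_of_real (y * (snd p - fst p)))))"
  have fint: "integrable (lborel \<Otimes>\<^sub>M (lborel \<Otimes>\<^sub>M lborel)) (case_prod f)"
    apply (rule integrable_pair_bound[OF sfm_lborel sfm_lborel2 _ integrable_gauss[OF d] int_hh])
    apply (unfold f_def gs_def)
    apply measurable
    apply (auto simp: norm_mult)
    done
  have "(\<integral>y. complex_of_real (gs \<delta> y) * (FT h y * cnj (FT h y)) \<partial>lborel) = (\<integral>y. \<integral>p. f y p \<partial>(lborel \<Otimes>\<^sub>M lborel) \<partial>lborel)"
    unfolding f_def FT_sq by simp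
  also have "\<dots> = (\<integral>p. \<integral>y. f y p \<partial>lborel \<partial>(lborel \<Otimes>\<^sub>M lborel))"
    by (rule P3.Fubini_integral[OF fint, symmetric])
  also have "\<dots> = (\<integral>p. h (snd p) * cnj (h (fst p)) * complex_of_real (KK \<delta> (snd p - fst p)) \<partial>(lborel \<Otimes>\<^sub>M lborel))"
  proof (rule Bochner_Integration.integral_cong[OF refl])
    fix p :: "real \<times> real"
    have "(\<lambda>y. f y p) = (\<lambda>y. (h (snd p) * cnj (h (fst p))) * (complex_of_real (gs \<delta> y) * exp (\<i> * complex_of_real (y * (snd p - fst p)))))"
      unfolding f_def by (auto simp: mult_ac)
    then show "(\<integral>y. f y p \<partial>lborel) = h (snd p) * cnj (h (fst p)) * complex_of_real (KK \<delta> (snd p - fst p))"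
      using gauss_scaled[OF d, of "snd p - fst p"] by (simp add: gs_def KK_def)
  qed
  finally show ?thesis .
qed


lemma KK_bound: "\<delta> > 0 \<Longrightarrow> 0 \<le> KK \<delta> v \<and> KK \<delta> v \<le> sqrt (2*pi) / \<delta>"
proof -
  assume d: "\<delta> > 0"
  have e: "exp (- (v/\<delta>)\<^sup>2 / 2) \<le> 1" by simp
  have "sqrt (2*pi) / \<delta> * exp (- (v/\<delta>)\<^sup>2 / 2) \<le> sqrt (2*pi) / \<delta> * 1"
    by (rule mult_left_mono[OF e]) (use d in simp)
  then show ?thesis using d unfolding KK_def by simp
qed

definition AA :: "real \<Rightarrow> real \<Rightarrow> complex" where
  "AA \<delta> u = (\<integral>x. h (u + \<delta>*x) * complex_of_real (sqrt (2*pi) * exp (- x\<^sup>2 / 2)) \<partial>lborel)"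

lemma step4:
  assumes d: "\<delta> > 0"
  shows "(\<integral>p. h (snd p) * cnj (h (fst p)) * complex_of_real (KK \<delta> (snd p - fst p)) \<partial>(lborel \<Otimes>\<^sub>M lborel))
     = (\<integral>u. cnj (h u) * AA \<delta> u \<partial>lborel)"
proof -
  have int2: "integrable lborel (\<lambda>t. norm (h t) * (sqrt (2*pi) / \<delta>))"
    using int_norm_h by simp
  have pint: "integrable (lborel \<Otimes>\<^sub>M lborel) (\<lambda>p. h (snd p) * cnj (h (fst p)) * complex_of_real (KK \<delta> (snd p - fst p)))"
    apply (rule integrable_pair_bound[OF sfm_lborel sfm_lborel _ int_norm_h int2])
    subgoal unfolding KK_def by measurable
    subgoal by simp
    subgoal using d by simp
    subgoal for x y
    proof -
      have "norm (h (snd (x, y)) * cnj (h (fst (x, y))) * complex_of_real (KK \<delta> (snd (x, y) - fst (x, y))))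
          = norm (h x) * (norm (h y) * KK \<delta> (y - x))"
        using KK_bound[OF d, of "y - x"] by (simp add: norm_mult)
      also have "\<dots> \<le> norm (h x) * (norm (h y) * (sqrt (2*pi) / \<delta>))"
        using KK_bound[OF d, of "y - x"] by (intro mult_left_mono) auto
      finally show ?thesis .
    qed
    done
  have "(\<integral>p. h (snd p) * cnj (h (fst p)) * complex_of_real (KK \<delta> (snd p - fst p)) \<partial>(lborel \<Otimes>\<^sub>M lborel))
    = (\<integral>u. \<integral>t. h (snd (u,t)) * cnj (h (fst (u,t))) * complex_of_real (KK \<delta> (snd (u,t) - fst (u,t))) \<partial>lborel \<partial>lborel)"
    using lborel_pair.integral_fst'[OF pint] by simp
  also have "\<dots> = (\<integral>u. cnj (h u) * AA \<delta> u \<partial>lborel)"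
  proof (rule Bochner_Integration.integral_cong[OF refl])
    fix u :: real
    have "(\<integral>t. h t * complex_of_real (KK \<delta> (t - u)) \<partial>lborel)
       = \<bar>\<delta>\<bar> *\<^sub>R (\<integral>x. h (u + \<delta>*x) * complex_of_real (KK \<delta> ((u + \<delta>*x) - u)) \<partial>lborel)"
      by (rule lborel_integral_real_affine) (use d in auto)
    also have "\<dots> = AA \<delta> u"
    proof -
      have "(\<lambda>x. h (u + \<delta>*x) * complex_of_real (KK \<delta> ((u + \<delta>*x) - u)))
         = (\<lambda>x. complex_of_real (1/\<delta>) * (h (u + \<delta>*x) * complex_of_real (sqrt (2*pi) * exp (- x\<^sup>2 / 2))))"
        using d by (auto simp: KK_def field_simps)
      then show ?thesis using d unfolding AA_def
        by (simp add: scaleR_conv_of_real)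
    qed
    finally have "(\<integral>t. h t * complex_of_real (KK \<delta> (t - u)) \<partial>lborel) = AA \<delta> u" .
    then show "(\<integral>t. h (snd (u,t)) * cnj (h (fst (u,t))) * complex_of_real (KK \<delta> (snd (u,t) - fst (u,t))) \<partial>lborel)
       = cnj (h u) * AA \<delta> u"
    proof -
      have "(\<lambda>t. h (snd (u,t)) * cnj (h (fst (u,t))) * complex_of_real (KK \<delta> (snd (u,t) - fst (u,t))))
         = (\<lambda>t. cnj (h u) * (h t * complex_of_real (KK \<delta> (t - u))))"
        by (auto simp: mult_ac)
      then show ?thesis using \<open>(\<integral>t. h t * complex_of_real (KK \<delta> (t - u)) \<partial>lborel) = AA \<delta> u\<close>
        by simp
    qed
  qed
  finally show ?thesis .
qed

lemma B0: "B \<ge> 0" using bnd[of 0] norm_ge_zero order_trans by blast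


lemma int_gd: "integrable lborel (\<lambda>x. B * (sqrt (2*pi) * exp (- x\<^sup>2 / 2)))"
  using integrable_gauss[of 1] by (intro integrable_mult_right) simp

lemma integral_gd1: "(\<integral>x. exp (- x\<^sup>2 / 2) \<partial>lborel) = sqrt (2*pi)"
  using integral_gauss[of 1] by simp

lemma hcont_at: "isCont h x"
  using cont continuous_on_eq_continuous_at[of UNIV h] by simp

lemma AA_int: "integrable lborel (\<lambda>x. h (u + \<delta>*x) * complex_of_real (sqrt (2*pi) * exp (- x\<^sup>2 / 2)))"
  apply (rule Bochner_Integration.integrable_bound[OF int_gd])
  apply measurable
  apply (intro AE_I2)
  using bnd[of "u + \<delta>*x" for x] B0
  apply (auto simp: norm_mult intro!: mult_right_mono)
  done

lemma AA_bound: "norm (AA \<delta> u) \<le> B * (2*pi)"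
proof -
  have "norm (AA \<delta> u) \<le> (\<integral>x. B * (sqrt (2*pi) * exp (- x\<^sup>2 / 2)) \<partial>lborel)"
    unfolding AA_def
    by (rule Bochner_Integration.integral_norm_bound_integral[OF AA_int int_gd]) (use bnd in \<open>auto simp: norm_mult intro!: mult_right_mono\<close>)
  also have "\<dots> = B * (sqrt (2*pi) * (\<integral>x. exp (- x\<^sup>2 / 2) \<partial>lborel))"
    by (simp only: integral_mult_right_zero)
  also have "\<dots> = B * (2*pi)"
    by (simp only: integral_gd1) simp
  finally show ?thesis .
qed

lemma AA_meas[measurable]: "AA \<delta> \<in> borel_measurable borel"
  unfolding AA_def[abs_def] by measurable

lemma AA_lim: "(\<lambda>n. AA (inverse (real (Suc n))) u) \<longlonglongrightarrow> h u * complex_of_real (2*pi)"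
proof -
  have "(\<lambda>n. AA (inverse (real (Suc n))) u) \<longlonglongrightarrow>
        (\<integral>x. h u * complex_of_real (sqrt (2*pi) * exp (- x\<^sup>2 / 2)) \<partial>lborel)"
    unfolding AA_def
  proof (rule integral_dominated_convergence[OF _ _ int_gd])
    show "(\<lambda>x. h u * complex_of_real (sqrt (2*pi) * exp (- x\<^sup>2 / 2))) \<in> borel_measurable lborel"
      by measurable
    show "(\<lambda>x. h (u + inverse (real (Suc n)) * x) * complex_of_real (sqrt (2*pi) * exp (- x\<^sup>2 / 2))) \<in> borel_measurable lborel" for n
      by measurable
    show "AE x in lborel. (\<lambda>n. h (u + inverse (real (Suc n)) * x) * complex_of_real (sqrt (2*pi) * exp (- x\<^sup>2 / 2)))
        \<longlonglongrightarrow> h u * complex_of_real (sqrt (2*pi) * exp (- x\<^sup>2 / 2))"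
    proof (intro AE_I2 tendsto_mult tendsto_const)
      fix x :: real
      have "(\<lambda>n. u + inverse (real (Suc n)) * x) \<longlonglongrightarrow> u + 0 * x"
        by (intro tendsto_intros LIMSEQ_inverse_real_of_nat)
      then show "(\<lambda>n. h (u + inverse (real (Suc n)) * x)) \<longlonglongrightarrow> h u"
        using isCont_tendsto_compose[OF hcont_at] by simp
    qed
    show "AE x in lborel. norm (h (u + inverse (real (Suc n)) * x) * complex_of_real (sqrt (2*pi) * exp (- x\<^sup>2 / 2)))
        \<le> B * (sqrt (2*pi) * exp (- x\<^sup>2 / 2))" for n
      using bnd by (intro AE_I2) (auto simp: norm_mult intro!: mult_right_mono)
  qed
  also have "(\<integral>x. h u * complex_of_real (sqrt (2*pi) * exp (- x\<^sup>2 / 2)) \<partial>lborel) = h u * complex_of_real (sqrt (2*pi) * (\<integral>x. exp (- x\<^sup>2 / 2) \<partial>lborel))"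
    by (simp only: integral_mult_right_zero integral_complex_of_real)
  also have "\<dots> = h u * complex_of_real (2*pi)"
    by (simp only: integral_gd1) simp
  finally show ?thesis .
qed

lemma outer_lim: "(\<lambda>n. \<integral>u. cnj (h u) * AA (inverse (real (Suc n))) u \<partial>lborel)
   \<longlonglongrightarrow> (\<integral>u. cnj (h u) * (h u * complex_of_real (2*pi)) \<partial>lborel)"
proof (rule integral_dominated_convergence[where w="\<lambda>u. norm (h u) * (B * (2*pi))"])
  show "integrable lborel (\<lambda>u. norm (h u) * (B * (2*pi)))"
    using int_norm_h by simp
  show "(\<lambda>u. cnj (h u) * (h u * complex_of_real (2*pi))) \<in> borel_measurable lborel" by measurable
  show "(\<lambda>u. cnj (h u) * AA (inverse (real (Suc n))) u) \<in> borel_measurable lborel" for n by measurable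
  show "AE x in lborel. (\<lambda>n. cnj (h x) * AA (inverse (real (Suc n))) x) \<longlonglongrightarrow> cnj (h x) * (h x * complex_of_real (2*pi))"
    by (intro AE_I2 tendsto_mult tendsto_const AA_lim)
  show "AE x in lborel. norm (cnj (h x) * AA (inverse (real (Suc n))) x) \<le> norm (h x) * (B * (2*pi))" for n
    using AA_bound by (intro AE_I2) (auto simp: norm_mult intro!: mult_left_mono)
qed


lemma gs_mono: "n \<le> m \<Longrightarrow> gs (inverse (real (Suc n))) y \<le> gs (inverse (real (Suc m))) y"
proof -
  assume nm: "n \<le> m"
  have "inverse (real (Suc m)) \<le> inverse (real (Suc n))" by (rule le_imp_inverse_le) (use nm in auto)
  then have "(inverse (real (Suc m)))\<^sup>2 \<le> (inverse (real (Suc n)))\<^sup>2"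
    by (intro power_mono) auto
  then have "(inverse (real (Suc m)) * y)\<^sup>2 \<le> (inverse (real (Suc n)) * y)\<^sup>2"
    unfolding power_mult_distrib by (rule mult_right_mono) auto
  then show ?thesis unfolding gs_def by simp
qed

lemma gs_lim: "(\<lambda>n. gs (inverse (real (Suc n))) y) \<longlonglongrightarrow> 1"
proof -
  have "(\<lambda>n. gs (inverse (real (Suc n))) y) \<longlonglongrightarrow> exp (- (0 * y)\<^sup>2 / 2)"
    unfolding gs_def by (intro tendsto_intros LIMSEQ_inverse_real_of_nat) auto
  then show ?thesis by simp
qed

lemma gs_pos: "0 \<le> gs d y" "gs d y \<le> 1"
  unfolding gs_def by auto

theorem plancherel:
  "(\<integral>\<^sup>+y. ennreal ((norm (FT h y))\<^sup>2) \<partial>lborel) = ennreal (2*pi * (\<integral>t. (norm (h t))\<^sup>2 \<partial>lborel))"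
proof -
  define \<delta> where "\<delta> n = inverse (real (Suc n))" for n
  have dpos: "\<delta> n > 0" for n unfolding \<delta>_def by simp
  define L where "L = (\<integral>t. norm (h t) \<partial>lborel)"
  define r where "r n = (\<integral>y. (norm (FT h y))\<^sup>2 * gs (\<delta> n) y \<partial>lborel)" for n
  have int_r: "integrable lborel (\<lambda>y. (norm (FT h y))\<^sup>2 * gs (\<delta> n) y)" for n
  proof (rule Bochner_Integration.integrable_bound)
    show "integrable lborel (\<lambda>y. L\<^sup>2 * gs (\<delta> n) y)"
      unfolding gs_def using integrable_gauss[OF dpos[of n]] by (intro integrable_mult_right)
    show "(\<lambda>y. (norm (FT h y))\<^sup>2 * gs (\<delta> n) y) \<in> borel_measurable lborel"
      unfolding gs_def by measurable
    show "AE y in lborel. norm ((norm (FT h y))\<^sup>2 * gs (\<delta> n) y) \<le> norm (L\<^sup>2 * gs (\<delta> n) y)"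
    proof (intro AE_I2)
      fix y
      have "(norm (FT h y))\<^sup>2 \<le> L\<^sup>2"
        unfolding L_def by (intro power_mono FT_bound) auto
      then show "norm ((norm (FT h y))\<^sup>2 * gs (\<delta> n) y) \<le> norm (L\<^sup>2 * gs (\<delta> n) y)"
        using gs_pos[of "\<delta> n" y] by (simp add: abs_mult mult_right_mono)
    qed
  qed
  have r_eq: "complex_of_real (r n) = (\<integral>u. cnj (h u) * AA (\<delta> n) u \<partial>lborel)" for n
  proof -
    have "complex_of_real (r n) = (\<integral>y. complex_of_real ((norm (FT h y))\<^sup>2 * gs (\<delta> n) y) \<partial>lborel)"
      unfolding r_def by (rule integral_complex_of_real[symmetric])
    also have "\<dots> = (\<integral>y. complex_of_real (gs (\<delta> n) y) * (FT h y * cnj (FT h y)) \<partial>lborel)"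
      by (simp add: complex_norm_square[symmetric] mult.commute)
    also have "\<dots> = (\<integral>u. cnj (h u) * AA (\<delta> n) u \<partial>lborel)"
      using step3[OF dpos[of n]] step4[OF dpos[of n]] by simp
    finally show ?thesis .
  qed
  have lim_c: "(\<lambda>n. complex_of_real (r n)) \<longlonglongrightarrow> complex_of_real (2*pi * (\<integral>t. (norm (h t))\<^sup>2 \<partial>lborel))"
  proof -
    have "(\<integral>u. cnj (h u) * (h u * complex_of_real (2*pi)) \<partial>lborel)
       = (\<integral>u. complex_of_real (2*pi * (norm (h u))\<^sup>2) \<partial>lborel)"
    proof (rule Bochner_Integration.integral_cong[OF refl])
      fix u
      have e: "complex_of_real (2*pi*(norm (h u))\<^sup>2) = complex_of_real (2*pi) * (h u * cnj (h u))"
        by (simp only: of_real_mult complex_norm_square)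
      show "cnj (h u) * (h u * complex_of_real (2*pi)) = complex_of_real (2*pi*(norm (h u))\<^sup>2)"
        by (subst e) (simp add: mult_ac)
    qed
    also have "\<dots> = complex_of_real (2*pi * (\<integral>t. (norm (h t))\<^sup>2 \<partial>lborel))"
      by (simp only: integral_complex_of_real integral_mult_right_zero)
    finally show ?thesis using outer_lim unfolding r_eq \<delta>_def by simp
  qed
  have lim_r: "r \<longlonglongrightarrow> 2*pi * (\<integral>t. (norm (h t))\<^sup>2 \<partial>lborel)"
    using tendsto_Re[OF lim_c] by simp
  define f where "f n y = ennreal ((norm (FT h y))\<^sup>2 * gs (\<delta> n) y)" for n y
  have f_inc: "incseq f"
    unfolding f_def \<delta>_def
    by (intro monoI le_funI ennreal_leI mult_left_mono gs_mono) auto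
  have f_meas: "f n \<in> borel_measurable lborel" for n
    unfolding f_def gs_def by measurable
  have f_sup: "(SUP n. f n y) = ennreal ((norm (FT h y))\<^sup>2)" for y
  proof -
    have "(\<lambda>n. f n y) \<longlonglongrightarrow> ennreal ((norm (FT h y))\<^sup>2 * 1)"
      unfolding f_def \<delta>_def by (intro tendsto_ennrealI tendsto_mult tendsto_const gs_lim)
    moreover have "(\<lambda>n. f n y) \<longlonglongrightarrow> (SUP n. f n y)"
      by (rule LIMSEQ_SUP) (use f_inc in \<open>auto simp: incseq_def le_fun_def\<close>)
    ultimately show ?thesis using LIMSEQ_unique by fastforce
  qed
  have f_int: "(\<integral>\<^sup>+y. f n y \<partial>lborel) = ennreal (r n)" for n
    unfolding f_def r_def
    by (rule nn_integral_eq_integral[OF int_r]) (use gs_pos in auto)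
  have "(\<integral>\<^sup>+y. ennreal ((norm (FT h y))\<^sup>2) \<partial>lborel) = (\<integral>\<^sup>+y. (SUP n. f n y) \<partial>lborel)"
    by (simp add: f_sup)
  also have "\<dots> = (SUP n. (\<integral>\<^sup>+y. f n y \<partial>lborel))"
    by (rule nn_integral_monotone_convergence_SUP[OF f_inc f_meas])
  also have "\<dots> = ennreal (2*pi * (\<integral>t. (norm (h t))\<^sup>2 \<partial>lborel))"
  proof -
    have inc: "incseq (\<lambda>n. \<integral>\<^sup>+y. f n y \<partial>lborel)"
      using f_inc by (auto simp: incseq_def le_fun_def intro!: nn_integral_mono)
    have "(\<lambda>n. \<integral>\<^sup>+y. f n y \<partial>lborel) \<longlonglongrightarrow> ennreal (2*pi * (\<integral>t. (norm (h t))\<^sup>2 \<partial>lborel))"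
      unfolding f_int by (intro tendsto_ennrealI lim_r)
    then show ?thesis using LIMSEQ_unique[OF LIMSEQ_SUP[OF inc]] by simp
  qed
  finally show ?thesis .
qed

end



lemma gamma_sub:
  fixes s :: complex and b :: real
  assumes s: "Re s > 0" and b: "b > 0"
  shows "integrable lborel (\<lambda>t. exp (s * complex_of_real t) * complex_of_real (exp (- b * exp t)))"
    and "(\<integral>t. exp (s * complex_of_real t) * complex_of_real (exp (- b * exp t)) \<partial>lborel)
         = Gamma s * exp (- s * complex_of_real (ln b))"
proof -
  define f where "f = (\<lambda>x::real. complex_of_real x powr (s - 1) / complex_of_real (exp x))"
  define G where "G = (\<lambda>t::real. exp (s * complex_of_real (ln b)) * (exp (s * complex_of_real t) * complex_of_real (exp (- b * exp t))))"
  have img: "(\<lambda>t. b * exp t) ` UNIV = {0<..}"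
  proof (auto simp: b)
    fix x :: real assume "x > 0"
    then have "x = b * exp (ln (x / b))" using b by simp
    then show "x \<in> range (\<lambda>t. b * exp t)" by blast
  qed
  have FG: "\<bar>b * exp t\<bar> *\<^sub>R f (b * exp t) = G t" for t
  proof -
    have pos: "b * exp t > 0" using b by simp
    have ln: "ln (b * exp t) = ln b + t" using b by (simp add: ln_mult)
    have "complex_of_real (b * exp t) powr (s - 1) = exp ((s - 1) * complex_of_real (ln b + t))"
    proof -
      have L: "Ln (complex_of_real (b * exp t)) = complex_of_real (ln b + t)"
        using Ln_of_real[OF pos] ln by (simp del: of_real_mult)
      show ?thesis unfolding powr_def using pos L b by (simp del: of_real_mult)
    qed
    then have "\<bar>b * exp t\<bar> *\<^sub>R f (b * exp t) = complex_of_real (b * exp t) * exp ((s - 1) * complex_of_real (ln b + t)) / complex_of_real (exp (b * exp t))"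
      using pos unfolding f_def by (simp add: scaleR_conv_of_real)
    also have "complex_of_real (b * exp t) = exp (complex_of_real (ln b + t))"
      using b by (simp only: exp_of_real) (simp add: exp_add)
    also have "exp (complex_of_real (ln b + t)) * exp ((s - 1) * complex_of_real (ln b + t)) = exp (s * complex_of_real (ln b + t))"
      by (simp add: exp_add[symmetric] algebra_simps)
    also have "exp (s * complex_of_real (ln b + t)) / complex_of_real (exp (b * exp t)) = G t"
      unfolding G_def by (simp add: exp_add[symmetric] exp_minus algebra_simps field_simps of_real_exp[symmetric] exp_diff)
    finally show ?thesis .
  qed
  have cov: "(\<lambda>x. \<bar>b * exp x\<bar> *\<^sub>R f (b * exp x)) absolutely_integrable_on UNIV \<and>
      integral UNIV (\<lambda>x. \<bar>b * exp x\<bar> *\<^sub>R f (b * exp x)) = Gamma s"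
  proof (rule has_absolute_integral_change_of_variables_real[THEN iffD2])
    show "UNIV \<in> sets lebesgue" by simp
    show "((\<lambda>t. b * exp t) has_field_derivative b * exp x) (at x within UNIV)" for x
      by (auto intro!: derivative_eq_intros)
    show "inj_on (\<lambda>t. b * exp t) UNIV" using b by (auto simp: inj_on_def)
    show "f absolutely_integrable_on (\<lambda>t. b * exp t) ` UNIV \<and> integral ((\<lambda>t. b * exp t) ` UNIV) f = Gamma s"
      unfolding img f_def
      using absolutely_integrable_Gamma_integral'[OF s] Gamma_integral_complex'[OF s]
      by (simp add: integral_unique)
  qed
  have Gm[measurable]: "G \<in> borel_measurable borel" unfolding G_def by measurable
  have Gai: "G absolutely_integrable_on UNIV" and GI: "integral UNIV G = Gamma s"
    using cov unfolding FG by auto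
  have Gint: "integrable lborel G"
    using Gai integrable_completion[of G lborel] by (simp add: set_integrable_def)
  have GI2: "(\<integral>t. G t \<partial>lborel) = Gamma s"
    using integral_lborel[OF Gint] GI by simp
  have e: "(\<lambda>t. exp (s * complex_of_real t) * complex_of_real (exp (- b * exp t))) = (\<lambda>t. exp (- s * complex_of_real (ln b)) * G t)"
    unfolding G_def by (auto simp: exp_minus field_simps)
  show "integrable lborel (\<lambda>t. exp (s * complex_of_real t) * complex_of_real (exp (- b * exp t)))"
    unfolding e using Gint by simp
  show "(\<integral>t. exp (s * complex_of_real t) * complex_of_real (exp (- b * exp t)) \<partial>lborel)
         = Gamma s * exp (- s * complex_of_real (ln b))"
    unfolding e using GI2 by (simp add: mult.commute)
qed



definition termf :: "real \<Rightarrow> real \<Rightarrow> real \<Rightarrow> complex" where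
  "termf a \<sigma> t = complex_of_real (exp (\<sigma> * t) * exp (- exp t / a))"

lemma termf_eq: "termf a \<sigma> t = exp (complex_of_real \<sigma> * complex_of_real t) * complex_of_real (exp (- (1/a) * exp t))"
proof -
  have "termf a \<sigma> t = complex_of_real (exp (\<sigma> * t)) * complex_of_real (exp (- (1/a) * exp t))"
    unfolding termf_def by simp
  also have "complex_of_real (exp (\<sigma> * t)) = exp (complex_of_real \<sigma> * complex_of_real t)"
    by (metis exp_of_real of_real_mult)
  finally show ?thesis .
qed

lemma termf_props:
  assumes a: "a > 0" and sg: "\<sigma> > 0"
  shows "integrable lborel (termf a \<sigma>)"
    and "FT (termf a \<sigma>) y = Gamma (Complex \<sigma> y) * exp (Complex \<sigma> y * complex_of_real (ln a))"
proof -
  have b: "1/a > 0" using a by simp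
  have e1: "termf a \<sigma> = (\<lambda>t. exp (complex_of_real \<sigma> * complex_of_real t) * complex_of_real (exp (- (1/a) * exp t)))"
    using termf_eq by blast
  show "integrable lborel (termf a \<sigma>)"
    unfolding e1 by (rule gamma_sub(1)) (use sg b in auto)
  have e2: "(\<lambda>t. exp (\<i> * complex_of_real (y * t)) * termf a \<sigma> t) =
     (\<lambda>t. exp (Complex \<sigma> y * complex_of_real t) * complex_of_real (exp (- (1/a) * exp t)))"
  proof
    fix t
    have "Complex \<sigma> y * complex_of_real t = complex_of_real (\<sigma> * t) + \<i> * complex_of_real (y * t)"
      by (simp add: complex_eq_iff)
    then show "exp (\<i> * complex_of_real (y * t)) * termf a \<sigma> t =
      exp (Complex \<sigma> y * complex_of_real t) * complex_of_real (exp (- (1/a) * exp t))"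
      unfolding termf_eq by (simp add: exp_add mult_ac)
  qed
  have "FT (termf a \<sigma>) y = Gamma (Complex \<sigma> y) * exp (- Complex \<sigma> y * complex_of_real (ln (1/a)))"
    unfolding FT_def e2 by (rule gamma_sub(2)) (use sg b in auto)
  then show "FT (termf a \<sigma>) y = Gamma (Complex \<sigma> y) * exp (Complex \<sigma> y * complex_of_real (ln a))"
    using a by (simp add: ln_div)
qed

definition hn :: "real set \<Rightarrow> (real \<Rightarrow> complex) \<Rightarrow> real \<Rightarrow> real \<Rightarrow> complex" where
  "hn A c \<sigma> t = (\<Sum>a\<in>A. (c a / complex_of_real a) * termf a \<sigma> t)"

lemma termf_bound:
  assumes a: "a > 0" and sg: "\<sigma> > 0"
  shows "norm (termf a \<sigma> t) \<le> exp (\<sigma> * ln (\<sigma> * a) - \<sigma>)"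
proof -
  have "ln (exp t / (\<sigma> * a)) \<le> exp t / (\<sigma> * a) - 1"
    using a sg by (intro ln_le_minus_one) auto
  then have "t - ln (\<sigma> * a) \<le> exp t / (\<sigma> * a) - 1"
    using a sg by (simp add: ln_div)
  then have "\<sigma> * (t - ln (\<sigma> * a)) \<le> \<sigma> * (exp t / (\<sigma> * a) - 1)"
    using sg by (intro mult_left_mono) auto
  moreover have "\<sigma> * (exp t / (\<sigma> * a) - 1) = exp t / a - \<sigma>" using sg a by (simp add: field_simps)
  ultimately have "\<sigma> * t - exp t / a \<le> \<sigma> * ln (\<sigma> * a) - \<sigma>"
    by (simp add: algebra_simps)
  then have "exp (\<sigma> * t - exp t / a) \<le> exp (\<sigma> * ln (\<sigma> * a) - \<sigma>)" by simp
  moreover have "norm (termf a \<sigma> t) = exp (\<sigma> * t - exp t / a)"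
    unfolding termf_def by (simp add: mult_exp_exp)
  ultimately show ?thesis by simp
qed

lemma hn_props:
  assumes A: "finite A" "A \<subseteq> {0<..}" and sg: "\<sigma> > 0"
  shows "continuous_on UNIV (hn A c \<sigma>)"
    and "integrable lborel (hn A c \<sigma>)"
    and "norm (hn A c \<sigma> t) \<le> (\<Sum>a\<in>A. norm (c a / complex_of_real a) * exp (\<sigma> * ln (\<sigma> * a) - \<sigma>))"
    and "FT (hn A c \<sigma>) y = Gamma (Complex \<sigma> y) * (\<Sum>a\<in>A. c a * expfun a (Complex (\<sigma> - 1) y))"
proof -
  show "continuous_on UNIV (hn A c \<sigma>)"
    unfolding hn_def[abs_def] termf_def using A by (intro continuous_intros) auto
  have ti: "integrable lborel (termf a \<sigma>)" if "a \<in> A" for a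
    using termf_props(1)[of a \<sigma>] that A sg by auto
  show "integrable lborel (hn A c \<sigma>)"
    unfolding hn_def[abs_def] using ti by (intro Bochner_Integration.integrable_sum integrable_mult_right) auto
  show "norm (hn A c \<sigma> t) \<le> (\<Sum>a\<in>A. norm (c a / complex_of_real a) * exp (\<sigma> * ln (\<sigma> * a) - \<sigma>))"
    unfolding hn_def
    apply (rule order_trans[OF norm_sum])
    apply (rule sum_mono)
    subgoal for a
      using termf_bound[of a \<sigma> t] A sg
      by (simp only: norm_mult) (auto intro!: mult_left_mono)
    done
  have "FT (hn A c \<sigma>) y = (\<Sum>a\<in>A. (c a / complex_of_real a) * FT (termf a \<sigma>) y)"
  proof -
    have "FT (hn A c \<sigma>) y = (\<integral>t. (\<Sum>a\<in>A. (c a / complex_of_real a) * (exp (\<i> * complex_of_real (y * t)) * termf a \<sigma> t)) \<partial>lborel)"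
      unfolding FT_def hn_def by (simp add: sum_distrib_left mult_ac)
    also have "\<dots> = (\<Sum>a\<in>A. (\<integral>t. (c a / complex_of_real a) * (exp (\<i> * complex_of_real (y * t)) * termf a \<sigma> t) \<partial>lborel))"
    proof (rule Bochner_Integration.integral_sum)
      fix a assume "a \<in> A"
      have "integrable lborel (\<lambda>t. exp (\<i> * complex_of_real (y * t)) * termf a \<sigma> t)"
        apply (rule Bochner_Integration.integrable_bound[OF integrable_norm[OF ti[OF \<open>a \<in> A\<close>]]])
        apply (unfold termf_def, measurable)
        apply (auto simp: norm_mult)
        done
      then show "integrable lborel (\<lambda>t. (c a / complex_of_real a) * (exp (\<i> * complex_of_real (y * t)) * termf a \<sigma> t))"
        by (rule integrable_mult_right)
    qed
    also have "\<dots> = (\<Sum>a\<in>A. (c a / complex_of_real a) * FT (termf a \<sigma>) y)"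
      unfolding FT_def by simp
    finally show ?thesis .
  qed
  also have "\<dots> = Gamma (Complex \<sigma> y) * (\<Sum>a\<in>A. c a * expfun a (Complex (\<sigma> - 1) y))"
    unfolding sum_distrib_left
  proof (rule sum.cong[OF refl])
    fix a assume aA: "a \<in> A"
    then have a: "a > 0" using A by auto
    have "exp (Complex \<sigma> y * complex_of_real (ln a)) = complex_of_real a * exp (Complex (\<sigma> - 1) y * complex_of_real (ln a))"
    proof -
      have "Complex \<sigma> y * complex_of_real (ln a) = complex_of_real (ln a) + Complex (\<sigma> - 1) y * complex_of_real (ln a)"
        by (simp add: complex_eq_iff algebra_simps)
      then show ?thesis using a by (simp add: exp_add exp_of_real)
    qed
    then show "c a / complex_of_real a * FT (termf a \<sigma>) y = Gamma (Complex \<sigma> y) * (c a * expfun a (Complex (\<sigma> - 1) y))"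
      using termf_props(2)[OF a sg, of y] a unfolding expfun_def by (simp add: field_simps)
  qed
  finally show "FT (hn A c \<sigma>) y = Gamma (Complex \<sigma> y) * (\<Sum>a\<in>A. c a * expfun a (Complex (\<sigma> - 1) y))" .
qed



lemma line_int_span:
  assumes A: "finite A" "A \<subseteq> {0<..}" and n: "n \<ge> -1"
  shows "line_int (\<lambda>z. \<Sum>a\<in>A. c a * expfun a z) n
     = ennreal ((\<integral>t. (norm (hn A c (real_of_int n / 2 + 1) t))\<^sup>2 \<partial>lborel) / fact (nat (n+1)))"
proof -
  define \<sigma> where "\<sigma> = real_of_int n / 2 + 1"
  have sg: "\<sigma> > 0" using n unfolding \<sigma>_def by linarith
  define C where "C = 1 / (2 * pi * fact (nat (n+1)))"
  have C0: "C \<ge> 0" unfolding C_def by simp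
  note hp = hn_props[OF A sg, of c]
  have P: "(\<integral>\<^sup>+y. ennreal ((norm (FT (hn A c \<sigma>) y))\<^sup>2) \<partial>lborel)
      = ennreal (2*pi * (\<integral>t. (norm (hn A c \<sigma> t))\<^sup>2 \<partial>lborel))"
    by (rule plancherel[OF hp(1) hp(2) hp(3)])
  have pw: "(cmod ((\<lambda>z. \<Sum>a\<in>A. c a * expfun a z) (Complex (real_of_int n / 2) y)))\<^sup>2 * mu_weight n y
      = (norm (FT (hn A c \<sigma>) y))\<^sup>2 * C" for y
  proof -
    have "\<sigma> - 1 = real_of_int n / 2" unfolding \<sigma>_def by simp
    then have F: "FT (hn A c \<sigma>) y = Gamma (Complex (real_of_int n / 2 + 1) y) * (\<Sum>a\<in>A. c a * expfun a (Complex (real_of_int n / 2) y))"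
      using hp(4)[of y] unfolding \<sigma>_def by simp
    show ?thesis
      unfolding F mu_weight_def C_def
      by (simp add: norm_mult power_mult_distrib)
  qed
  have "line_int (\<lambda>z. \<Sum>a\<in>A. c a * expfun a z) n = (\<integral>\<^sup>+y. ennreal ((norm (FT (hn A c \<sigma>) y))\<^sup>2) * ennreal C \<partial>lborel)"
    unfolding line_int_def pw using C0 by (simp add: ennreal_mult)
  also have "\<dots> = ennreal (2*pi * (\<integral>t. (norm (hn A c \<sigma> t))\<^sup>2 \<partial>lborel)) * ennreal C"
  proof -
    have [measurable]: "FT (hn A c \<sigma>) \<in> borel_measurable borel" by (rule FT_meas[OF hp(1) hp(2) hp(3)])
    show ?thesis by (subst nn_integral_multc) (auto simp: P)
  qed
  also have "\<dots> = ennreal ((\<integral>t. (norm (hn A c \<sigma> t))\<^sup>2 \<partial>lborel) / fact (nat (n+1)))"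
    using C0 by (simp add: ennreal_mult[symmetric] C_def)
  finally show ?thesis unfolding \<sigma>_def .
qed



lemma key_ineq:
  fixes E K :: real and m :: nat
  assumes E: "E > 0" and K: "K \<ge> 0"
  shows "E^(m+2)*K/fact(m+1) \<le> (real m+2)*(E^(m+1)*K/fact m + E^(m+3)*K/fact(m+2))"
proof -
  define F where "F = (fact m :: real)"
  have F: "F > 0" unfolding F_def by simp
  have f1: "(fact (m+1) :: real) = (real m + 1) * F" unfolding F_def by simp
  have f2: "(fact (m+2) :: real) = (real m + 2) * ((real m + 1) * F)" unfolding F_def
    by (simp add: algebra_simps)
  define P where "P = E^(m+1) * K"
  have P: "P \<ge> 0" unfolding P_def using E K by simp
  have e: "E \<le> (real m + 1) * (real m + 2) + E^2"
  proof -
    have "E \<le> 1 + E^2" using sum_squares_ge_zero[of "E - 1" 0] E by (simp add: power2_eq_square algebra_simps)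
    moreover have "1 \<le> (real m + 1) * (real m + 2)" by (simp add: algebra_simps)
    ultimately show ?thesis by linarith
  qed
  have "P * E \<le> P * ((real m + 1) * (real m + 2) + E^2)"
    using mult_left_mono[OF e P] .
  then have main: "P * E \<le> (real m + 1) * (real m + 2) * P + P * E^2"
    by (simp add: algebra_simps)
  have l: "E^(m+2)*K/fact(m+1) = (P * E) / ((real m + 1) * F)"
    unfolding f1 P_def by (simp add: algebra_simps)
  have r: "(real m+2)*(E^(m+1)*K/fact m + E^(m+3)*K/fact(m+2))
      = ((real m + 1) * (real m + 2) * P + P * E^2) / ((real m + 1) * F)"
  proof -
    have E3: "E^(m+3)*K = P*E^2" unfolding P_def by (simp add: power_add power2_eq_square power3_eq_cube)
    have E1: "E^(m+1)*K = P" unfolding P_def by simp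
    have m1: "real m + 1 > 0" "real m + 2 > 0" by auto
    have gen: "b*(P/F + P*E^2/(b*(a*F))) = (a*b*P + P*E^2)/(a*F)" if "a > 0" "b > 0" for a b :: real
      using that F by (simp add: field_simps)
    show ?thesis unfolding f2 E3 E1 F_def[symmetric]
      using gen[OF m1] by (simp add: mult.commute)
  qed
  show ?thesis unfolding l r
    by (rule divide_right_mono[OF main]) (use F in simp)
qed



definition Wf :: "real set \<Rightarrow> (real \<Rightarrow> complex) \<Rightarrow> real \<Rightarrow> complex" where
  "Wf A c t = (\<Sum>a\<in>A. (c a / complex_of_real a) * complex_of_real (exp (- exp t / a)))"

definition Qf :: "real set \<Rightarrow> (real \<Rightarrow> complex) \<Rightarrow> nat \<Rightarrow> real \<Rightarrow> real" where
  "Qf A c k t = exp t ^ k * (norm (Wf A c t))\<^sup>2"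

lemma hn_Wf: "hn A c \<sigma> t = complex_of_real (exp (\<sigma> * t)) * Wf A c t"
  unfolding hn_def Wf_def termf_def sum_distrib_left
  by (rule sum.cong[OF refl]) (simp add: mult_ac)

lemma hn_sq_int:
  assumes A: "finite A" "A \<subseteq> {0<..}" and sg: "\<sigma> > 0"
  shows "integrable lborel (\<lambda>t. (norm (hn A c \<sigma> t))\<^sup>2)"
proof -
  note hp = hn_props[OF A sg, of c]
  define Bh where "Bh = (\<Sum>a\<in>A. norm (c a / complex_of_real a) * exp (\<sigma> * ln (\<sigma> * a) - \<sigma>))"
  have [measurable]: "hn A c \<sigma> \<in> borel_measurable borel"
    using hp(1) by (rule borel_measurable_continuous_onI)
  show ?thesis
  proof (rule Bochner_Integration.integrable_bound[where f="\<lambda>t. Bh * norm (hn A c \<sigma> t)"])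
    show "integrable lborel (\<lambda>t. Bh * norm (hn A c \<sigma> t))"
      using hp(2) by (intro integrable_mult_right integrable_norm)
    show "(\<lambda>t. (norm (hn A c \<sigma> t))\<^sup>2) \<in> borel_measurable lborel" by measurable
    show "AE t in lborel. norm ((norm (hn A c \<sigma> t))\<^sup>2) \<le> norm (Bh * norm (hn A c \<sigma> t))"
    proof (intro AE_I2)
      fix t
      have b: "norm (hn A c \<sigma> t) \<le> Bh" using hp(3) unfolding Bh_def .
      then have "Bh \<ge> 0" using norm_ge_zero order_trans by blast
      then show "norm ((norm (hn A c \<sigma> t))\<^sup>2) \<le> norm (Bh * norm (hn A c \<sigma> t))"
        using b by (simp add: power2_eq_square abs_mult mult_right_mono)
    qed
  qed
qed

lemma hn_sq_Q:
  assumes n: "n \<ge> -1"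
  shows "(norm (hn A c (real_of_int n / 2 + 1) t))\<^sup>2 = Qf A c (nat (n+2)) t"
proof -
  have "real (nat (n+2)) = 2 * (real_of_int n / 2 + 1)" using n by simp
  then have "exp t ^ nat (n+2) = (exp ((real_of_int n / 2 + 1) * t))\<^sup>2"
  proof -
    assume h: "real (nat (n+2)) = 2 * (real_of_int n / 2 + 1)"
    have "exp t ^ nat (n+2) = exp (real (nat (n+2)) * t)" by (simp add: exp_of_nat_mult)
    also have "\<dots> = exp (2 * ((real_of_int n / 2 + 1) * t))" unfolding h by (simp add: mult.assoc)
    also have "\<dots> = (exp ((real_of_int n / 2 + 1) * t))\<^sup>2" by (rule exp_double)
    finally show ?thesis .
  qed
  then show ?thesis
    unfolding Qf_def hn_Wf by (simp add: norm_mult power_mult_distrib)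
qed

lemma Q_int:
  assumes A: "finite A" "A \<subseteq> {0<..}" and n: "n \<ge> -1"
  shows "integrable lborel (Qf A c (nat (n+2)))"
proof -
  have "integrable lborel (\<lambda>t. (norm (hn A c (real_of_int n / 2 + 1) t))\<^sup>2)"
    by (rule hn_sq_int[OF A]) (use n in linarith)
  then show ?thesis unfolding hn_sq_Q[OF n] by simp
qed

lemma line_int_span_Q:
  assumes A: "finite A" "A \<subseteq> {0<..}" and n: "n \<ge> -1"
  shows "line_int (\<lambda>z. \<Sum>a\<in>A. c a * expfun a z) n
     = ennreal ((\<integral>t. Qf A c (nat (n+2)) t \<partial>lborel) / fact (nat (n+1)))"
  unfolding line_int_span[OF A n] hn_sq_Q[OF n] ..


lemma span_ineq:
  assumes A: "finite A" "A \<subseteq> {0<..}"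
  shows "line_int (\<lambda>z. \<Sum>a\<in>A. c a * expfun a z) (int m)
    \<le> ennreal (real m + 2) * (line_int (\<lambda>z. \<Sum>a\<in>A. c a * expfun a z) (int m - 1)
                             + line_int (\<lambda>z. \<Sum>a\<in>A. c a * expfun a z) (int m + 1))"
proof -
  have i1: "integrable lborel (Qf A c (m+2))" using Q_int[OF A, of "int m"] by (simp add: nat_add_distrib)
  have i0: "integrable lborel (Qf A c (m+1))" using Q_int[OF A, of "int m - 1"] by (simp add: nat_add_distrib)
  have i2: "integrable lborel (Qf A c (m+3))" using Q_int[OF A, of "int m + 1", of c] by (simp add: nat_add_distrib add.commute)
  have Q0: "Qf A c k t \<ge> 0" for k t unfolding Qf_def by simp
  have e1: "line_int (\<lambda>z. \<Sum>a\<in>A. c a * expfun a z) (int m) = ennreal ((\<integral>t. Qf A c (m+2) t \<partial>lborel) / fact (m+1))"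
    using line_int_span_Q[OF A, of "int m"] by (simp add: nat_add_distrib)
  have e0: "line_int (\<lambda>z. \<Sum>a\<in>A. c a * expfun a z) (int m - 1) = ennreal ((\<integral>t. Qf A c (m+1) t \<partial>lborel) / fact m)"
    using line_int_span_Q[OF A, of "int m - 1"] by (simp add: nat_add_distrib)
  have e2: "line_int (\<lambda>z. \<Sum>a\<in>A. c a * expfun a z) (int m + 1) = ennreal ((\<integral>t. Qf A c (m+3) t \<partial>lborel) / fact (m+2))"
  proof -
    have "nat (int m + 1 + 2) = m+3" "nat (int m + 1 + 1) = m+2" by simp_all
    then show ?thesis using line_int_span_Q[OF A, of "int m + 1" c] by (simp only:)
  qed
  have I0: "(\<integral>t. Qf A c k t \<partial>lborel) \<ge> 0" for k using Q0 by simp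
  have "(\<integral>t. Qf A c (m+2) t \<partial>lborel) / fact (m+1) = (\<integral>t. Qf A c (m+2) t / fact (m+1) \<partial>lborel)"
    by simp
  also have "\<dots> \<le> (\<integral>t. (real m + 2) * (Qf A c (m+1) t / fact m + Qf A c (m+3) t / fact (m+2)) \<partial>lborel)"
  proof (rule integral_mono)
    show "integrable lborel (\<lambda>t. Qf A c (m+2) t / fact (m+1))" using i1 by simp
    show "integrable lborel (\<lambda>t. (real m + 2) * (Qf A c (m+1) t / fact m + Qf A c (m+3) t / fact (m+2)))"
      using i0 i2 by simp
    fix t
    show "Qf A c (m+2) t / fact (m+1) \<le> (real m + 2) * (Qf A c (m+1) t / fact m + Qf A c (m+3) t / fact (m+2))"
      unfolding Qf_def using key_ineq[of "exp t" "(norm (Wf A c t))\<^sup>2" m] by (simp add: mult.assoc)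
  qed
  also have "\<dots> = (real m + 2) * ((\<integral>t. Qf A c (m+1) t \<partial>lborel) / fact m + (\<integral>t. Qf A c (m+3) t \<partial>lborel) / fact (m+2))"
    using i0 i2 by simp
  finally have r: "(\<integral>t. Qf A c (m+2) t \<partial>lborel) / fact (m+1) \<le> (real m + 2) * ((\<integral>t. Qf A c (m+1) t \<partial>lborel) / fact m + (\<integral>t. Qf A c (m+3) t \<partial>lborel) / fact (m+2))" .
  show ?thesis unfolding e0 e1 e2
    using r I0 by (simp add: ennreal_mult[symmetric] ennreal_plus[symmetric] del: ennreal_plus)
qed



lemma sq_split:
  fixes a b :: complex and \<delta> :: real
  assumes d: "\<delta> > 0"
  shows "(norm (a + b))\<^sup>2 \<le> (1+\<delta>) * (norm a)\<^sup>2 + (1 + 1/\<delta>) * (norm b)\<^sup>2"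
proof -
  define x where "x = norm a"
  define y where "y = norm b"
  have x: "x \<ge> 0" and y: "y \<ge> 0" unfolding x_def y_def by auto
  have "norm (a + b) \<le> x + y" unfolding x_def y_def by (rule norm_triangle_ineq)
  then have "(norm (a + b))\<^sup>2 \<le> (x + y)\<^sup>2" by (intro power_mono) auto
  also have "\<dots> \<le> (1+\<delta>) * x\<^sup>2 + (1 + 1/\<delta>) * y\<^sup>2"
  proof -
    have "0 \<le> (\<delta> * x - y)\<^sup>2" by simp
    then have "2 * \<delta> * x * y \<le> \<delta>\<^sup>2 * x\<^sup>2 + y\<^sup>2" by (simp add: power2_eq_square algebra_simps)
    then have "2 * x * y \<le> \<delta> * x\<^sup>2 + y\<^sup>2 / \<delta>" using d
      by (simp add: field_simps power2_eq_square)
    then show ?thesis using d by (simp add: power2_eq_square field_simps)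
  qed
  finally show ?thesis unfolding x_def y_def .
qed

lemma mu_weight_meas:
  assumes n: "n \<ge> -1"
  shows "mu_weight n \<in> borel_measurable borel"
proof -
  have "continuous_on UNIV (\<lambda>y. Gamma (Complex (real_of_int n / 2 + 1) y))"
  proof (subst continuous_on_eq_continuous_at, simp, intro ballI)
    fix y :: real
    have nz: "Complex (real_of_int n / 2 + 1) y \<notin> \<int>\<^sub>\<le>\<^sub>0"
    proof
      assume "Complex (real_of_int n / 2 + 1) y \<in> \<int>\<^sub>\<le>\<^sub>0"
      then have "Re (Complex (real_of_int n / 2 + 1) y) \<le> 0"
        by (auto elim!: nonpos_Ints_cases simp: complex_eq_iff)
      then show False using n by simp
    qed
    have c: "isCont (\<lambda>y. Complex (real_of_int n / 2 + 1) y) y"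
      unfolding Complex_eq by (intro continuous_intros)
    show "isCont (\<lambda>y. Gamma (Complex (real_of_int n / 2 + 1) y)) y"
      by (rule isCont_Gamma[OF c nz])
  qed
  then have [measurable]: "(\<lambda>y. Gamma (Complex (real_of_int n / 2 + 1) y)) \<in> borel_measurable borel"
    by (rule borel_measurable_continuous_onI)
  show ?thesis unfolding mu_weight_def[abs_def] by measurable
qed

lemma span_meas:
  assumes "g \<in> span_exp"
  shows "(\<lambda>y. g (Complex x y)) \<in> borel_measurable borel"
proof -
  obtain A c where g: "g = (\<lambda>z. \<Sum>a\<in>A. c a * expfun a z)" using assms unfolding span_exp_def by auto
  have "continuous_on UNIV (\<lambda>y. g (Complex x y))"
    unfolding g expfun_def Complex_eq by (intro continuous_intros)
  then show ?thesis by (rule borel_measurable_continuous_onI)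
qed

lemma line_split:
  assumes d: "\<delta> > 0" and n: "n \<ge> -1"
    and mg: "(\<lambda>y. g (Complex (real_of_int n / 2) y)) \<in> borel_measurable borel"
    and mfg: "(\<lambda>y. f (Complex (real_of_int n / 2) y) - g (Complex (real_of_int n / 2) y)) \<in> borel_measurable borel"
  shows "line_int f n \<le> ennreal (1+\<delta>) * line_int g n + ennreal (1 + 1/\<delta>) * line_int (\<lambda>z. f z - g z) n"
proof -
  have [measurable]: "mu_weight n \<in> borel_measurable borel" by (rule mu_weight_meas[OF n])
  note mg[measurable] mfg[measurable]
  have w0: "mu_weight n y \<ge> 0" for y unfolding mu_weight_def by simp
  have "line_int f n \<le> (\<integral>\<^sup>+y. ennreal (1+\<delta>) * ennreal ((cmod (g (Complex (real_of_int n / 2) y)))\<^sup>2 * mu_weight n y)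
      + ennreal (1 + 1/\<delta>) * ennreal ((cmod (f (Complex (real_of_int n / 2) y) - g (Complex (real_of_int n / 2) y)))\<^sup>2 * mu_weight n y) \<partial>lborel)"
    unfolding line_int_def
  proof (rule nn_integral_mono)
    fix y
    define a where "a = g (Complex (real_of_int n / 2) y)"
    define b where "b = f (Complex (real_of_int n / 2) y) - g (Complex (real_of_int n / 2) y)"
    have fab: "f (Complex (real_of_int n / 2) y) = a + b" unfolding a_def b_def by simp
    have "(cmod (a + b))\<^sup>2 * mu_weight n y \<le> ((1+\<delta>) * (cmod a)\<^sup>2 + (1 + 1/\<delta>) * (cmod b)\<^sup>2) * mu_weight n y"
      by (rule mult_right_mono[OF sq_split[OF d] w0])
    then show "ennreal ((cmod (f (Complex (real_of_int n / 2) y)))\<^sup>2 * mu_weight n y)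
       \<le> ennreal (1+\<delta>) * ennreal ((cmod (g (Complex (real_of_int n / 2) y)))\<^sup>2 * mu_weight n y)
        + ennreal (1 + 1/\<delta>) * ennreal ((cmod (f (Complex (real_of_int n / 2) y) - g (Complex (real_of_int n / 2) y)))\<^sup>2 * mu_weight n y)"
      unfolding fab a_def[symmetric] b_def[symmetric] using d w0[of y]
      by (simp add: ennreal_mult[symmetric] ennreal_plus[symmetric] algebra_simps del: ennreal_plus)
  qed
  also have "\<dots> = ennreal (1+\<delta>) * line_int g n + ennreal (1 + 1/\<delta>) * line_int (\<lambda>z. f z - g z) n"
    unfolding line_int_def
    by (subst nn_integral_add) (auto simp: nn_integral_cmult)
  finally show ?thesis .
qed



definition lines_meas :: "(complex \<Rightarrow> complex) \<Rightarrow> bool" where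
  "lines_meas f \<longleftrightarrow> (\<forall>n::int. n \<ge> -1 \<longrightarrow> (\<lambda>y. f (Complex (real_of_int n / 2) y)) \<in> borel_measurable borel)"

lemma sum_split:
  assumes d: "\<delta> > 0" and mg: "lines_meas g" and mfg: "lines_meas (\<lambda>z. f z - g z)"
  shows "(\<Sum>k. if P k then 0 else line_int f (int k - 1))
    \<le> ennreal (1+\<delta>) * (\<Sum>k. if P k then 0 else line_int g (int k - 1))
      + ennreal (1 + 1/\<delta>) * (\<Sum>k. if P k then 0 else line_int (\<lambda>z. f z - g z) (int k - 1))"
proof -
  have "(\<Sum>k. if P k then 0 else line_int f (int k - 1))
     \<le> (\<Sum>k. ennreal (1+\<delta>) * (if P k then 0 else line_int g (int k - 1))
          + ennreal (1 + 1/\<delta>) * (if P k then 0 else line_int (\<lambda>z. f z - g z) (int k - 1)))"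
  proof (rule suminf_le[OF _ summableI summableI])
    fix k :: nat
    have n: "int k - 1 \<ge> -1" by simp
    show "(if P k then 0 else line_int f (int k - 1))
       \<le> ennreal (1+\<delta>) * (if P k then 0 else line_int g (int k - 1))
          + ennreal (1 + 1/\<delta>) * (if P k then 0 else line_int (\<lambda>z. f z - g z) (int k - 1))"
    proof -
      have m1: "(\<lambda>y. g (Complex (real_of_int (int k - 1) / 2) y)) \<in> borel_measurable borel"
        using mg n unfolding lines_meas_def by blast
      have m2: "(\<lambda>y. f (Complex (real_of_int (int k - 1) / 2) y) - g (Complex (real_of_int (int k - 1) / 2) y)) \<in> borel_measurable borel"
        using mfg n unfolding lines_meas_def by blast
      show ?thesis using line_split[OF d n m1 m2] by auto
    qed
  qed
  also have "\<dots> = ennreal (1+\<delta>) * (\<Sum>k. if P k then 0 else line_int g (int k - 1))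
      + ennreal (1 + 1/\<delta>) * (\<Sum>k. if P k then 0 else line_int (\<lambda>z. f z - g z) (int k - 1))"
    by (simp add: suminf_add[OF summableI summableI, symmetric])
  finally show ?thesis .
qed

lemma total_decomp:
  "L2mu_normsq f = (\<Sum>k. if k = m + 1 then 0 else line_int f (int k - 1)) + line_int f (int m)"
proof -
  have s: "(\<lambda>k. if k = m + 1 then line_int f (int k - 1) else 0) sums line_int f (int (m+1) - 1)"
    by (rule sums_single)
  have "L2mu_normsq f = (\<Sum>k. (if k = m + 1 then 0 else line_int f (int k - 1)) + (if k = m + 1 then line_int f (int k - 1) else 0))"
    unfolding L2mu_normsq_def by (rule suminf_cong) auto
  also have "\<dots> = (\<Sum>k. if k = m + 1 then 0 else line_int f (int k - 1)) + (\<Sum>k. if k = m + 1 then line_int f (int k - 1) else 0)"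
    by (rule suminf_add[OF summableI summableI, symmetric])
  also have "(\<Sum>k. if k = m + 1 then line_int f (int k - 1) else 0) = line_int f (int m)"
    using sums_unique[OF s] by simp
  finally show ?thesis .
qed

lemma S_le_T: "(\<Sum>k. if P k then 0 else line_int f (int k - 1)) \<le> L2mu_normsq f"
  unfolding L2mu_normsq_def by (rule suminf_le[OF _ summableI summableI]) auto

lemma span_T_le:
  assumes g: "g \<in> span_exp"
  shows "L2mu_normsq g \<le> ennreal (real m + 3) * (\<Sum>k. if k = m + 1 then 0 else line_int g (int k - 1))"
proof -
  obtain A c where gd: "g = (\<lambda>z. \<Sum>a\<in>A. c a * expfun a z)" and A: "finite A" "A \<subseteq> {0<..1}"
    using g unfolding span_exp_def by auto
  have A': "A \<subseteq> {0<..}" using A by auto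
  define S where "S = (\<Sum>k. if k = m + 1 then 0 else line_int g (int k - 1))"
  have "line_int g (int m - 1) + line_int g (int m + 1)
     = (\<Sum>k\<in>{m, m+2}. if k = m + 1 then 0 else line_int g (int k - 1))"
    by (simp add: add.commute)
  also have "\<dots> \<le> S" unfolding S_def
    by (rule sum_le_suminf[OF summableI]) auto
  finally have S2: "line_int g (int m - 1) + line_int g (int m + 1) \<le> S" .
  have "line_int g (int m) \<le> ennreal (real m + 2) * (line_int g (int m - 1) + line_int g (int m + 1))"
    unfolding gd by (rule span_ineq[OF A(1) A'])
  also have "\<dots> \<le> ennreal (real m + 2) * S"
    by (rule mult_left_mono[OF S2]) simp
  finally have Lm: "line_int g (int m) \<le> ennreal (real m + 2) * S" .
  have "L2mu_normsq g = S + line_int g (int m)"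
    unfolding S_def by (rule total_decomp)
  also have "\<dots> \<le> S + ennreal (real m + 2) * S"
    using Lm by (rule add_left_mono)
  also have "\<dots> = ennreal (real m + 3) * S"
  proof -
    have "ennreal (real m + 3) = ennreal 1 + ennreal (real m + 2)"
      by (subst ennreal_plus[symmetric]) (auto simp: add.commute)
    then show ?thesis by (simp only: distrib_right ennreal_1 mult_1_left)
  qed
  finally show ?thesis unfolding S_def .
qed



lemma enn_comb:
  assumes "a \<ge> 0" "b \<ge> 0" "p \<ge> 0" "q \<ge> 0" "x \<le> ennreal p" "y \<le> ennreal q"
  shows "ennreal a * x + ennreal b * y \<le> ennreal (a * p + b * q)"
proof -
  have "ennreal a * x + ennreal b * y \<le> ennreal a * ennreal p + ennreal b * ennreal q"
    using assms by (intro add_mono mult_left_mono) auto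
  also have "\<dots> = ennreal (a * p + b * q)"
    using assms by (simp add: ennreal_mult ennreal_plus)
  finally show ?thesis .
qed

lemma real_limit_arg:
  fixes t s :: real and m :: nat
  assumes s: "s \<ge> 0"
    and H: "\<And>\<delta> \<epsilon>. \<delta> > 0 \<Longrightarrow> \<epsilon> > 0 \<Longrightarrow>
       t \<le> (1+\<delta>) * ((real m + 3) * ((1+\<delta>) * s + (1 + 1/\<delta>) * \<epsilon>)) + (1 + 1/\<delta>) * \<epsilon>"
  shows "t \<le> (real m + 3) * s"
proof -
  have H1: "t \<le> (1+\<delta>) * ((real m + 3) * ((1+\<delta>) * s))" if d: "\<delta> > 0" for \<delta>
  proof -
    have "((\<lambda>\<epsilon>. (1+\<delta>) * ((real m + 3) * ((1+\<delta>) * s + (1 + 1/\<delta>) * \<epsilon>)) + (1 + 1/\<delta>) * \<epsilon>)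
       \<longlongrightarrow> (1+\<delta>) * ((real m + 3) * ((1+\<delta>) * s + (1 + 1/\<delta>) * 0)) + (1 + 1/\<delta>) * 0) (at_right 0)"
      by (intro tendsto_intros)
    then have lim: "((\<lambda>\<epsilon>. (1+\<delta>) * ((real m + 3) * ((1+\<delta>) * s + (1 + 1/\<delta>) * \<epsilon>)) + (1 + 1/\<delta>) * \<epsilon>)
       \<longlongrightarrow> (1+\<delta>) * ((real m + 3) * ((1+\<delta>) * s))) (at_right 0)" by simp
    have ev: "\<forall>\<^sub>F \<epsilon> in at_right 0. t \<le> (1+\<delta>) * ((real m + 3) * ((1+\<delta>) * s + (1 + 1/\<delta>) * \<epsilon>)) + (1 + 1/\<delta>) * \<epsilon>"
      using eventually_at_right_less[of "0::real"] by eventually_elim (rule H[OF d], simp)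
    show ?thesis by (rule tendsto_lowerbound[OF lim ev]) simp
  qed
  have "((\<lambda>\<delta>. (1+\<delta>) * ((real m + 3) * ((1+\<delta>) * s))) \<longlongrightarrow> (1+0) * ((real m + 3) * ((1+0) * s))) (at_right 0)"
    by (intro tendsto_intros)
  then have lim: "((\<lambda>\<delta>. (1+\<delta>) * ((real m + 3) * ((1+\<delta>) * s))) \<longlongrightarrow> (real m + 3) * s) (at_right 0)" by simp
  have ev: "\<forall>\<^sub>F \<delta> in at_right 0. t \<le> (1+\<delta>) * ((real m + 3) * ((1+\<delta>) * s))"
    using eventually_at_right_less[of "0::real"] by eventually_elim (rule H1, simp)
  show ?thesis by (rule tendsto_lowerbound[OF lim ev]) simp
qed

theorem mainTheorem6:
  fixes f :: "complex \<Rightarrow> complex" and m :: nat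
  assumes "H2mu f"
  shows "L2mu_normsq f \<le> ennreal (real m + 3) *
           (\<Sum>k. if k = m + 1 then 0 else line_int f (int k - 1))"
proof -
  define Sf where "Sf = (\<lambda>h. \<Sum>k. if k = m + 1 then 0 else line_int h (int k - 1))"
  have L2: "in_L2mu f" and appr: "\<And>e. e > 0 \<Longrightarrow> \<exists>g\<in>span_exp. L2mu_normsq (\<lambda>z. f z - g z) < ennreal e"
    using assms unfolding H2mu_def by auto
  have lmf: "lines_meas f" using L2 unfolding in_L2mu_def lines_meas_def by simp
  have Tfin: "L2mu_normsq f < \<infinity>" using L2 unfolding in_L2mu_def by simp
  show ?thesis
  proof (cases "Sf f = \<top>")
    case True
    then have "ennreal (real m + 3) * Sf f = \<top>" by (simp add: ennreal_mult_top)
    then show ?thesis unfolding Sf_def by simp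
  next
    case False
    obtain s where s: "Sf f = ennreal s" "s \<ge> 0" using False by (cases "Sf f") auto
    obtain t where t: "L2mu_normsq f = ennreal t" "t \<ge> 0" using Tfin by (cases "L2mu_normsq f") auto
    have "t \<le> (real m + 3) * s"
    proof (rule real_limit_arg[OF s(2)])
      fix \<delta> \<epsilon> :: real assume d: "\<delta> > 0" and e: "\<epsilon> > 0"
      obtain g where g: "g \<in> span_exp" and gl: "L2mu_normsq (\<lambda>z. f z - g z) < ennreal \<epsilon>"
        using appr[OF e] by auto
      have lmg: "lines_meas g" unfolding lines_meas_def using span_meas[OF g] by simp
      have lmfg: "lines_meas (\<lambda>z. f z - g z)" using lmf lmg unfolding lines_meas_def by (auto intro!: borel_measurable_diff)
      have lmgf: "lines_meas (\<lambda>z. g z - f z)" using lmf lmg unfolding lines_meas_def by (auto intro!: borel_measurable_diff)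
      have A: "L2mu_normsq f \<le> ennreal (1+\<delta>) * L2mu_normsq g + ennreal (1 + 1/\<delta>) * L2mu_normsq (\<lambda>z. f z - g z)"
        using sum_split[OF d lmg lmfg, of "\<lambda>k. False"] unfolding L2mu_normsq_def by simp
      have B: "Sf g \<le> ennreal (1+\<delta>) * Sf f + ennreal (1 + 1/\<delta>) * Sf (\<lambda>z. g z - f z)"
        using sum_split[OF d lmf lmgf, of "\<lambda>k. k = m + 1"] unfolding Sf_def by simp
      have sym: "line_int (\<lambda>z. g z - f z) n = line_int (\<lambda>z. f z - g z) n" for n
        unfolding line_int_def by (simp add: norm_minus_commute)
      have C: "Sf (\<lambda>z. g z - f z) \<le> ennreal \<epsilon>"
      proof -
        have "Sf (\<lambda>z. g z - f z) \<le> L2mu_normsq (\<lambda>z. g z - f z)" unfolding Sf_def by (rule S_le_T)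
        also have "\<dots> = L2mu_normsq (\<lambda>z. f z - g z)" unfolding L2mu_normsq_def sym ..
        finally show ?thesis using gl by simp
      qed
      have D: "L2mu_normsq g \<le> ennreal (real m + 3) * Sf g"
        unfolding Sf_def by (rule span_T_le[OF g])
      have "ennreal (1+\<delta>) * Sf f + ennreal (1 + 1/\<delta>) * Sf (\<lambda>z. g z - f z) \<le> ennreal ((1+\<delta>) * s + (1 + 1/\<delta>) * \<epsilon>)"
        by (rule enn_comb) (use d e s C in auto)
      then have Sg: "Sf g \<le> ennreal ((1+\<delta>) * s + (1 + 1/\<delta>) * \<epsilon>)"
        by (rule order_trans[OF B])
      have Tg: "L2mu_normsq g \<le> ennreal ((real m + 3) * ((1+\<delta>) * s + (1 + 1/\<delta>) * \<epsilon>))"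
      proof -
        have "ennreal (real m + 3) * Sf g \<le> ennreal (real m + 3) * ennreal ((1+\<delta>) * s + (1 + 1/\<delta>) * \<epsilon>)"
          by (rule mult_left_mono[OF Sg]) simp
        also have "\<dots> = ennreal ((real m + 3) * ((1+\<delta>) * s + (1 + 1/\<delta>) * \<epsilon>))"
          by (rule ennreal_mult[symmetric]) (use d e s in auto)
        finally show ?thesis by (rule order_trans[OF D])
      qed
      have "ennreal (1+\<delta>) * L2mu_normsq g + ennreal (1 + 1/\<delta>) * L2mu_normsq (\<lambda>z. f z - g z)
          \<le> ennreal ((1+\<delta>) * ((real m + 3) * ((1+\<delta>) * s + (1 + 1/\<delta>) * \<epsilon>)) + (1 + 1/\<delta>) * \<epsilon>)"
        by (rule enn_comb[OF _ _ _ _ Tg]) (use d e s gl in auto)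
      then have "ennreal t \<le> ennreal ((1+\<delta>) * ((real m + 3) * ((1+\<delta>) * s + (1 + 1/\<delta>) * \<epsilon>)) + (1 + 1/\<delta>) * \<epsilon>)"
        using A unfolding t(1) by (rule order_trans[rotated])
      then show "t \<le> (1+\<delta>) * ((real m + 3) * ((1+\<delta>) * s + (1 + 1/\<delta>) * \<epsilon>)) + (1 + 1/\<delta>) * \<epsilon>"
        using d e s by (subst (asm) ennreal_le_iff) auto
    qed
    then have "ennreal t \<le> ennreal ((real m + 3) * s)" by (rule ennreal_leI)
    also have "ennreal ((real m + 3) * s) = ennreal (real m + 3) * Sf f"
      unfolding s(1) by (rule ennreal_mult) (use s in auto)
    also have "Sf f = (\<Sum>k. if k = m + 1 then 0 else line_int f (int k - 1))"
      unfolding Sf_def ..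
    finally show ?thesis unfolding t(1) .
  qed
qed

end
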